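(* Let $\overline F_1=\mathrm{As}\odot\Bbbk\{\mathsf f_n\mid n\ge1\}\odot\mathrm{As}$ be the free $\mathrm{As}$-$\mathrm{As}$-bimodule on generators $\mathsf f_n$ of arity $n$, degree $1-n$, with differential $$\mathsf f_k\partial=\sum_{r+2+t=k}(-1)^t(1^{\otimes r}\otimes m\otimes1^{\otimes t})\mathsf f_{k-1}+\sum_{i+j=k,\ i,j\ge1}(-1)^j(\mathsf f_i\otimes\mathsf f_j)m,$$ where $m=m^{(2)}$. Let $p:\overline F_1\to\mathrm{As}$ be the bimodule map with $\mathsf f_1\mapsto m^{(1)}$ and $\mathsf f_n\mapsto0$ for $n\ge2$. Then $p$ is a homotopy equivalence in the dg-category of left $\mathrm{As}$-modules, with homotopy inverse the left $\mathrm{As}$-module map $\beta:\mathrm{As}\to\overline F_1$, $m^{(1)}\mapsto\mathsf f_1$; in particular $\beta p=1_{\mathrm{As}}$ and $p\beta$ is homotopic to an invertible map.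
   Context: $\Bbbk$ a commutative ring; complexes of $\Bbbk$-modules, Koszul signs. $\mathrm{As}$ is the dg-operad with $\mathrm{As}(0)=0$, $\mathrm{As}(n)=\Bbbk m^{(n)}$ ($n\ge1$, degree 0), $m^{(1)}$ the unit, $(m^{(n_1)}\otimes\dots\otimes m^{(n_k)})m^{(k)}=m^{(n_1+\dots+n_k)}$. Compositions and actions are written on the right: $(a_1\otimes\dots\otimes a_k)p$ is the left action of operad elements $a_s$ on $p$ of arity $k$; $(p_1\otimes\dots\otimes p_k)b$ is the right action; $1$ is the operad unit. As a left $\mathrm{As}$-module, $\overline F_1$ is free on the elements $(\mathsf f_{i_1}\otimes\dots\otimes\mathsf f_{i_k})m^{(k)}$, $k\ge1$, $i_s\ge1$. For a dg-operad $\mathcal O$, the dg-category of left $\mathcal O$-modules has as objects collections with an associative unital left action $\mathcal O\odot\mathcal P\to\mathcal P$, degree-$t$ morphisms $f$ are families of degree-$t$ linear maps $f(n):\mathcal P(n)\to\mathcal Q(n)$ commuting with the left action, and the differential is $f\mapsto f\partial-(-1)^{t}\partial f$. Composition is written in diagrammatic order ($\beta p$ means $\beta$ then $p$). *)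

theory Defs
  imports Main
begin

text \<open>A left As-module whose underlying collection is free over the ground ring
on a basis: bas n is the basis of arity n, dg gives the degree of a basis element,
actb as b is the basis element (m^(a_1) tensor ... tensor m^(a_n)) b (the As-action
sends basis elements to basis elements, since every As(n), n>=1, is free of rank one
on m^(n), and As(0)=0), and difb b is the differential of the basis element b,
given by its coefficient function.\<close>

record ('b, 'a) dgmod =
  bas  :: "nat \<Rightarrow> 'b set"
  dg   :: "'b \<Rightarrow> int"
  actb :: "nat list \<Rightarrow> 'b \<Rightarrow> 'b"
  difb :: "'b \<Rightarrow> 'b \<Rightarrow> 'a"

definition supp :: "('b \<Rightarrow> 'a::zero) \<Rightarrow> 'b set" where
  "supp x = {b. x b \<noteq> 0}"

definition elems :: "'b set \<Rightarrow> ('b \<Rightarrow> 'a::zero) set" where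
  "elems B = {x. finite (supp x) \<and> supp x \<subseteq> B}"

definition lin_ext :: "('b \<Rightarrow> 'c \<Rightarrow> 'a::comm_ring_1) \<Rightarrow> ('b \<Rightarrow> 'a) \<Rightarrow> ('c \<Rightarrow> 'a)" where
  "lin_ext F x = (\<lambda>c. \<Sum>b\<in>supp x. x b * F b c)"

definition lact :: "('b, 'a::comm_ring_1) dgmod \<Rightarrow> nat list \<Rightarrow> ('b \<Rightarrow> 'a) \<Rightarrow> ('b \<Rightarrow> 'a)" where
  "lact M as x = lin_ext (\<lambda>b c. if actb M as b = c then 1 else 0) x"

definition dif :: "('b, 'a::comm_ring_1) dgmod \<Rightarrow> ('b \<Rightarrow> 'a) \<Rightarrow> ('b \<Rightarrow> 'a)" where
  "dif M x = lin_ext (difb M) x"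

definition homog :: "('b, 'a::zero) dgmod \<Rightarrow> int \<Rightarrow> ('b \<Rightarrow> 'a) \<Rightarrow> bool" where
  "homog M d x \<longleftrightarrow> supp x \<subseteq> {b. dg M b = d}"

definition is_lmod_map ::
  "('b, 'a::comm_ring_1) dgmod \<Rightarrow> ('c, 'a) dgmod \<Rightarrow> int
     \<Rightarrow> (nat \<Rightarrow> ('b \<Rightarrow> 'a) \<Rightarrow> ('c \<Rightarrow> 'a)) \<Rightarrow> bool" where
  "is_lmod_map M Q t f \<longleftrightarrow>
    (\<forall>n.
      (\<forall>x\<in>elems (bas M n). f n x \<in> elems (bas Q n)) \<and>
      (\<forall>x\<in>elems (bas M n). \<forall>y\<in>elems (bas M n).
          f n (\<lambda>b. x b + y b) = (\<lambda>c. f n x c + f n y c)) \<and>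
      (\<forall>x\<in>elems (bas M n). \<forall>r. f n (\<lambda>b. r * x b) = (\<lambda>c. r * f n x c)) \<and>
      (\<forall>x\<in>elems (bas M n). \<forall>d. homog M d x \<longrightarrow> homog Q (d + t) (f n x)) \<and>
      (\<forall>as. \<forall>x\<in>elems (bas M n). length as = n \<and> (\<forall>a\<in>set as. 1 \<le> a) \<longrightarrow>
          f (sum_list as) (lact M as x) = lact Q as (f n x)))"

definition sgn_pow :: "int \<Rightarrow> 'a::comm_ring_1" where
  "sgn_pow t = (if even t then 1 else -1)"

text \<open>Differential of the hom-complex, diagrammatic order:
 D f = f\<partial> - (-1)^t \<partial>f, i.e. (f then \<partial>_Q) - (-1)^t (\<partial>_M then f).\<close>
definition dmap ::
  "('b, 'a::comm_ring_1) dgmod \<Rightarrow> ('c, 'a) dgmod \<Rightarrow> int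
     \<Rightarrow> (nat \<Rightarrow> ('b \<Rightarrow> 'a) \<Rightarrow> ('c \<Rightarrow> 'a)) \<Rightarrow> (nat \<Rightarrow> ('b \<Rightarrow> 'a) \<Rightarrow> ('c \<Rightarrow> 'a))" where
  "dmap M Q t f = (\<lambda>n x c. dif Q (f n x) c - sgn_pow t * f n (dif M x) c)"

definition closed_map ::
  "('b, 'a::comm_ring_1) dgmod \<Rightarrow> ('c, 'a) dgmod
     \<Rightarrow> (nat \<Rightarrow> ('b \<Rightarrow> 'a) \<Rightarrow> ('c \<Rightarrow> 'a)) \<Rightarrow> bool" where
  "closed_map M Q f \<longleftrightarrow> is_lmod_map M Q 0 f \<and>
     (\<forall>n. \<forall>x\<in>elems (bas M n). dmap M Q 0 f n x = (\<lambda>c. 0))"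

definition homotopic ::
  "('b, 'a::comm_ring_1) dgmod \<Rightarrow> ('c, 'a) dgmod
     \<Rightarrow> (nat \<Rightarrow> ('b \<Rightarrow> 'a) \<Rightarrow> ('c \<Rightarrow> 'a)) \<Rightarrow> (nat \<Rightarrow> ('b \<Rightarrow> 'a) \<Rightarrow> ('c \<Rightarrow> 'a)) \<Rightarrow> bool" where
  "homotopic M Q f g \<longleftrightarrow>
     (\<exists>h. is_lmod_map M Q (-1) h \<and>
        (\<forall>n. \<forall>x\<in>elems (bas M n). (\<lambda>c. f n x c - g n x c) = dmap M Q (-1) h n x))"

definition idmap :: "nat \<Rightarrow> ('b \<Rightarrow> 'a) \<Rightarrow> ('b \<Rightarrow> 'a)" where
  "idmap n x = x"

definition comp_map :: "(nat \<Rightarrow> 'x \<Rightarrow> 'y) \<Rightarrow> (nat \<Rightarrow> 'y \<Rightarrow> 'z) \<Rightarrow> nat \<Rightarrow> 'x \<Rightarrow> 'z" where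
  "comp_map f g n x = g n (f n x)"

text \<open>Basis of As(N) is m^(N) (labelled N), for N >= 1; As(0) = 0. Degree 0, zero differential.\<close>
definition AsMod :: "(nat, 'a::comm_ring_1) dgmod" where
  "AsMod = \<lparr> bas = (\<lambda>N. if 1 \<le> N then {N} else {}),
             dg = (\<lambda>_. 0),
             actb = (\<lambda>as N. sum_list as),
             difb = (\<lambda>_ _. 0) \<rparr>"

text \<open>Basis element (J, I) with J = [j_1..j_n], I = [i_1..i_k] stands for
 (m^(j_1) tensor ... tensor m^(j_n)) (f_{i_1} tensor ... tensor f_{i_k}) m^(k),
 with n = i_1 + ... + i_k; its arity is j_1 + ... + j_n and its degree is k - n.\<close>

definition F1basis :: "nat \<Rightarrow> (nat list \<times> nat list) set" where
  "F1basis N = {(J, I). (\<forall>j\<in>set J. 1 \<le> j) \<and> sum_list J = N \<and> I \<noteq> [] \<and>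
                        (\<forall>i\<in>set I. 1 \<le> i) \<and> sum_list I = length J}"

fun blocks :: "nat list \<Rightarrow> nat list \<Rightarrow> nat list" where
  "blocks as [] = []"
| "blocks as (j # J) = sum_list (take j as) # blocks (drop j as) J"

definition mergeAt :: "nat \<Rightarrow> nat list \<Rightarrow> nat list" where
  "mergeAt p J = take p J @ [J ! p + J ! Suc p] @ drop (p + 2) J"

definition splitAt :: "nat \<Rightarrow> nat \<Rightarrow> nat \<Rightarrow> nat list \<Rightarrow> nat list" where
  "splitAt s a b I = take s I @ [a, b] @ drop (Suc s) I"

text \<open>Koszul sign for applying the differential to the s-th factor (0-based) of
 (f_{i_1} tensor ... tensor f_{i_k}) m^(k): (-1)^(sum of degrees of the factors to its right).\<close>
definition eps :: "nat \<Rightarrow> nat list \<Rightarrow> 'a::comm_ring_1" where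
  "eps s I = (-1) ^ sum_list (map (\<lambda>i. i - 1) (drop (Suc s) I))"

text \<open>Differential on basis elements, obtained from
 f_k \<partial> = sum_{r+2+t=k} (-1)^t (1^r tensor m tensor 1^t) f_{k-1}
        + sum_{i+j=k, i,j>=1} (-1)^j (f_i tensor f_j) m
 by the Leibniz rule (Koszul signs) and compatibility with the As-actions.\<close>
definition F1difb :: "nat list \<times> nat list \<Rightarrow> nat list \<times> nat list \<Rightarrow> 'a::comm_ring_1" where
  "F1difb b b' = (case b of (J, I) \<Rightarrow>
     \<Sum>s<length I. eps s I *
       ((\<Sum>r<I ! s - 1. (-1) ^ (I ! s - 2 - r) *
            (if b' = (mergeAt (sum_list (take s I) + r) J, I[s := I ! s - 1]) then 1 else 0))
        + (\<Sum>a\<in>{1..<I ! s}. (-1) ^ (I ! s - a) *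
            (if b' = (J, splitAt s a (I ! s - a) I) then 1 else 0))))"

definition F1Mod :: "(nat list \<times> nat list, 'a::comm_ring_1) dgmod" where
  "F1Mod = \<lparr> bas = F1basis,
             dg = (\<lambda>(J, I). int (length I) - int (sum_list I)),
             actb = (\<lambda>as (J, I). (blocks as J, I)),
             difb = F1difb \<rparr>"

text \<open>p: the bimodule map with f_1 \<mapsto> m^(1), f_n \<mapsto> 0 (n >= 2); on the basis,
 (J, I) \<mapsto> m^(sum J) if all entries of I are 1, and 0 otherwise.\<close>
definition pmap :: "nat \<Rightarrow> (nat list \<times> nat list \<Rightarrow> 'a::comm_ring_1) \<Rightarrow> (nat \<Rightarrow> 'a)" where
  "pmap n = lin_ext (\<lambda>(J, I) N. if (\<forall>i\<in>set I. i = 1) \<and> N = sum_list J then 1 else 0)"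

text \<open>beta: the left As-module map with m^(1) \<mapsto> f_1; on the basis m^(N) \<mapsto> (m^(N)) f_1 = ([N],[1]).\<close>
definition betamap :: "nat \<Rightarrow> (nat \<Rightarrow> 'a::comm_ring_1) \<Rightarrow> (nat list \<times> nat list \<Rightarrow> 'a)" where
  "betamap n = lin_ext (\<lambda>N b. if b = ([N], [1]) then 1 else 0)"

end

theory Submission
  imports Defs
begin

lemma lin_ext_eq_sum:
  assumes "finite A" "supp x \<subseteq> A"
  shows "lin_ext F x c = (\<Sum>b\<in>A. x b * F b c)"
  unfolding lin_ext_def
  by (rule sum.mono_neutral_left) (use assms in \<open>auto simp: supp_def\<close>)

lemma supp_lin_ext: "supp (lin_ext F x) \<subseteq> (\<Union>b\<in>supp x. supp (F b))"
proof
  fix c assume c: "c \<in> supp (lin_ext F x)"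
  show "c \<in> (\<Union>b\<in>supp x. supp (F b))"
  proof (rule ccontr)
    assume "c \<notin> (\<Union>b\<in>supp x. supp (F b))"
    hence "\<forall>b\<in>supp x. F b c = 0" by (auto simp: supp_def)
    hence "lin_ext F x c = 0" by (simp add: lin_ext_def)
    thus False using c by (simp add: supp_def)
  qed
qed

lemma finite_supp_lin_ext:
  assumes "finite (supp x)" "\<forall>b\<in>supp x. finite (supp (F b))"
  shows "finite (supp (lin_ext F x))"
proof (rule finite_subset[OF supp_lin_ext])
  show "finite (\<Union>b\<in>supp x. supp (F b))" using assms by (intro finite_UN_I) auto
qed

lemma lin_ext_cong: "(\<And>b. b \<in> supp x \<Longrightarrow> F b = F' b) \<Longrightarrow> lin_ext F x = lin_ext F' x"
  by (simp add: lin_ext_def)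

lemma lin_ext_add:
  assumes "finite (supp x)" "finite (supp y)"
  shows "lin_ext F (\<lambda>b. x b + y b) = (\<lambda>c. lin_ext F x c + lin_ext F y c)"
proof
  fix c
  let ?A = "supp x \<union> supp y"
  have s: "supp (\<lambda>b. x b + y b) \<subseteq> ?A" by (auto simp: supp_def)
  show "lin_ext F (\<lambda>b. x b + y b) c = lin_ext F x c + lin_ext F y c"
    using assms s
    by (simp add: lin_ext_eq_sum[of ?A] distrib_right sum.distrib)
qed

lemma lin_ext_smult:
  assumes "finite (supp x)"
  shows "lin_ext F (\<lambda>b. r * x b) = (\<lambda>c. r * lin_ext F x c)"
proof
  fix c
  have s: "supp (\<lambda>b. r * x b) \<subseteq> supp x" by (auto simp: supp_def)
  show "lin_ext F (\<lambda>b. r * x b) c = r * lin_ext F x c"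
    using assms s
    by (simp add: lin_ext_eq_sum[of "supp x"] sum_distrib_left mult.assoc)
qed

lemma lin_ext_comp:
  assumes "finite (supp x)" "\<forall>b\<in>supp x. finite (supp (F b))"
  shows "lin_ext G (lin_ext F x) = lin_ext (\<lambda>b. lin_ext G (F b)) x"
proof
  fix c
  let ?A = "\<Union>b\<in>supp x. supp (F b)"
  have fA: "finite ?A" using assms by auto
  have "lin_ext G (lin_ext F x) c = (\<Sum>b'\<in>?A. lin_ext F x b' * G b' c)"
    using fA supp_lin_ext by (rule lin_ext_eq_sum)
  also have "\<dots> = (\<Sum>b'\<in>?A. (\<Sum>b\<in>supp x. x b * F b b') * G b' c)"
    by (simp add: lin_ext_def)
  also have "\<dots> = (\<Sum>b\<in>supp x. x b * (\<Sum>b'\<in>?A. F b b' * G b' c))"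
    by (simp add: sum_distrib_right sum_distrib_left mult.assoc sum.swap[where A="?A"])
  also have "\<dots> = (\<Sum>b\<in>supp x. x b * lin_ext G (F b) c)"
  proof (rule sum.cong[OF refl])
    fix b assume b: "b \<in> supp x"
    have "lin_ext G (F b) c = (\<Sum>b'\<in>?A. F b b' * G b' c)"
      using fA b by (intro lin_ext_eq_sum) auto
    thus "x b * (\<Sum>b'\<in>?A. F b b' * G b' c) = x b * lin_ext G (F b) c" by simp
  qed
  finally show "lin_ext G (lin_ext F x) c = lin_ext (\<lambda>b. lin_ext G (F b)) x c"
    by (simp add: lin_ext_def)
qed

lemma lin_ext_delta: "lin_ext F (\<lambda>b. if b = X then 1 else (0::'a::comm_ring_1)) = F X"
proof
  fix c
  have "supp (\<lambda>b. if b = X then 1 else (0::'a)) \<subseteq> {X}" by (auto simp: supp_def)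
  thus "lin_ext F (\<lambda>b. if b = X then 1 else (0::'a)) c = F X c"
    by (simp add: lin_ext_eq_sum[of "{X}"])
qed

lemma lin_ext_delta': "lin_ext F (\<lambda>b. if X = b then 1 else 0) = F X"
  using lin_ext_delta[of F X] by (simp add: eq_commute)

lemma lin_ext_zero: "lin_ext F (\<lambda>b. 0) = (\<lambda>c. 0)"
  by (simp add: lin_ext_def supp_def)

lemma lin_ext_zeroF: "lin_ext (\<lambda>b c. 0) x = (\<lambda>c. 0)"
  by (simp add: lin_ext_def)

lemma lin_ext_id: assumes "finite (supp x)" shows "lin_ext (\<lambda>b c. if c = b then 1 else 0) x = x"
proof
  fix c
  show "lin_ext (\<lambda>b c. if c = b then 1 else 0) x c = x c"
    using \<open>finite (supp x)\<close> by (cases "c \<in> supp x") (auto simp: lin_ext_def supp_def if_distrib sum.delta' cong: if_cong)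
qed

definition sd :: "('a::comm_ring_1 \<times> 'b) list \<Rightarrow> 'b \<Rightarrow> 'a" where
  "sd xs = (\<lambda>c. \<Sum>(r,y)\<leftarrow>xs. r * (if c = y then 1 else 0))"

lemma supp_sd: "supp (sd xs) \<subseteq> snd ` set xs"
proof (induction xs)
  case Nil thus ?case by (simp add: sd_def supp_def)
next
  case (Cons p xs)
  obtain r y where p: "p = (r,y)" by (cases p)
  show ?case using Cons p by (auto simp: sd_def supp_def)
qed

lemma finite_supp_sd: "finite (supp (sd xs))"
  by (rule finite_subset[OF supp_sd]) simp

lemma sum_sd:
  assumes "finite A" "snd ` set xs \<subseteq> A"
  shows "(\<Sum>b\<in>A. sd xs b * G b) = (\<Sum>(r,y)\<leftarrow>xs. r * G y)"
  using assms(2)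
proof (induction xs)
  case Nil thus ?case by (simp add: sd_def)
next
  case (Cons p xs)
  obtain r y where p: "p = (r,y)" by (cases p)
  have yA: "y \<in> A" using Cons p by auto
  have "(\<Sum>b\<in>A. sd (p#xs) b * G b) = (\<Sum>b\<in>A. (if b = y then r * G b else 0) + sd xs b * G b)"
    by (rule sum.cong) (auto simp: sd_def p distrib_right)
  also have "\<dots> = r * G y + (\<Sum>b\<in>A. sd xs b * G b)"
    using assms(1) yA by (simp add: sum.distrib)
  finally show ?case using Cons p by simp
qed

lemma lin_ext_sd: "lin_ext G (sd xs) c = (\<Sum>(r,y)\<leftarrow>xs. r * G y c)"
  by (simp add: lin_ext_eq_sum[of "snd ` set xs"] supp_sd sum_sd)


definition sg :: "nat list \<Rightarrow> 'a::comm_ring_1" where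
  "sg I = (-1) ^ sum_list (map (\<lambda>i. i - 1) I)"

fun zj :: "nat \<Rightarrow> nat list \<Rightarrow> nat list" where
  "zj j [] = [j]" | "zj j (y#ys) = (j+y)#ys"

fun lsuc :: "nat list \<Rightarrow> nat list" where
  "lsuc [] = []" | "lsuc (i#I) = Suc i # I"

definition Zj :: "nat \<Rightarrow> nat list \<times> nat list \<Rightarrow> nat list \<times> nat list" where
  "Zj j b = (zj j (fst b), snd b)"
definition Lj :: "nat \<Rightarrow> nat list \<times> nat list \<Rightarrow> nat list \<times> nat list" where
  "Lj j b = (j # fst b, lsuc (snd b))"
definition Fj :: "nat \<Rightarrow> nat list \<times> nat list \<Rightarrow> nat list \<times> nat list" where
  "Fj j b = (j # fst b, Suc 0 # snd b)"

definition Dsum :: "(nat list \<times> nat list \<Rightarrow> 'a::comm_ring_1) \<Rightarrow> nat list \<times> nat list \<Rightarrow> 'a" where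
  "Dsum g b = (case b of (J, I) \<Rightarrow>
     \<Sum>s<length I. eps s I *
       ((\<Sum>r<I ! s - 1. (-1) ^ (I ! s - 2 - r) *
            g (mergeAt (sum_list (take s I) + r) J, I[s := I ! s - 1]))
        + (\<Sum>a\<in>{1..<I ! s}. (-1) ^ (I ! s - a) *
            g (J, splitAt s a (I ! s - a) I))))"

definition Tg :: "nat list \<times> nat list \<Rightarrow> (nat list \<times> nat list) set" where
  "Tg b = (case b of (J, I) \<Rightarrow>
     \<Union>s\<in>{..<length I}. ((\<lambda>r. (mergeAt (sum_list (take s I) + r) J, I[s := I ! s - 1])) ` {..<I ! s - 1})
        \<union> ((\<lambda>a. (J, splitAt s a (I ! s - a) I)) ` {1..<I ! s}))"

lemma F1difb_Dsum: "F1difb b b' = Dsum (\<lambda>y. if b' = y then 1 else 0) b"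
  by (cases b) (simp add: F1difb_def Dsum_def)

lemma finite_Tg: "finite (Tg b)"
  by (cases b) (simp add: Tg_def)

lemma Dsum_cong:
  assumes h: "\<And>y. y \<in> Tg b \<Longrightarrow> g y = g' y"
  shows "Dsum g b = Dsum g' b"
proof -
  obtain J I where b: "b = (J, I)" by (cases b)
  show ?thesis unfolding b Dsum_def prod.case
  proof (rule sum.cong[OF refl])
    fix s assume s: "s \<in> {..<length I}"
    have 1: "(\<Sum>r<I ! s - 1. (-1) ^ (I ! s - 2 - r) * g (mergeAt (sum_list (take s I) + r) J, I[s := I ! s - 1]))
       = (\<Sum>r<I ! s - 1. (-1) ^ (I ! s - 2 - r) * g' (mergeAt (sum_list (take s I) + r) J, I[s := I ! s - 1]))"
    proof (rule sum.cong[OF refl])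
      fix r assume "r \<in> {..<I ! s - 1}"
      hence "(mergeAt (sum_list (take s I) + r) J, I[s := I ! s - 1]) \<in> Tg b"
        using s unfolding b Tg_def by blast
      thus "(-1) ^ (I ! s - 2 - r) * g (mergeAt (sum_list (take s I) + r) J, I[s := I ! s - 1]) =
            (-1) ^ (I ! s - 2 - r) * g' (mergeAt (sum_list (take s I) + r) J, I[s := I ! s - 1])"
        using h by simp
    qed
    have 2: "(\<Sum>a\<in>{1..<I ! s}. (-1) ^ (I ! s - a) * g (J, splitAt s a (I ! s - a) I))
       = (\<Sum>a\<in>{1..<I ! s}. (-1) ^ (I ! s - a) * g' (J, splitAt s a (I ! s - a) I))"
    proof (rule sum.cong[OF refl])
      fix a assume "a \<in> {1..<I ! s}"
      hence "(J, splitAt s a (I ! s - a) I) \<in> Tg b"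
        using s unfolding b Tg_def by blast
      thus "(-1) ^ (I ! s - a) * g (J, splitAt s a (I ! s - a) I) =
            (-1) ^ (I ! s - a) * g' (J, splitAt s a (I ! s - a) I)"
        using h by simp
    qed
    show "eps s I * ((\<Sum>r<I ! s - 1. (-1) ^ (I ! s - 2 - r) * g (mergeAt (sum_list (take s I) + r) J, I[s := I ! s - 1]))
           + (\<Sum>a\<in>{1..<I ! s}. (-1) ^ (I ! s - a) * g (J, splitAt s a (I ! s - a) I))) =
          eps s I * ((\<Sum>r<I ! s - 1. (-1) ^ (I ! s - 2 - r) * g' (mergeAt (sum_list (take s I) + r) J, I[s := I ! s - 1]))
           + (\<Sum>a\<in>{1..<I ! s}. (-1) ^ (I ! s - a) * g' (J, splitAt s a (I ! s - a) I)))"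
      using 1 2 by simp
  qed
qed

lemma Dsum_add: "Dsum (\<lambda>y. f y + g y) b = Dsum f b + Dsum g b"
  by (cases b) (simp add: Dsum_def sum.distrib algebra_simps)

lemma Dsum_cmult: "Dsum (\<lambda>y. r * f y) b = r * Dsum f b"
  by (cases b) (simp add: Dsum_def sum_distrib_left algebra_simps)

lemma Dsum_multr: "Dsum (\<lambda>y. f y * r) b = Dsum f b * r"
  using Dsum_cmult[of r f b] by (simp add: mult.commute)

lemma Dsum_zero: "Dsum (\<lambda>y. 0) b = 0"
  by (cases b) (simp add: Dsum_def)

lemma Dsum_uminus: "Dsum (\<lambda>y. - f y) b = - Dsum f b"
  using Dsum_cmult[of "-1" f b] by simp

lemma Dsum_diff: "Dsum (\<lambda>y. f y - g y) b = Dsum f b - Dsum g b"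
  using Dsum_add[of f "\<lambda>y. - g y" b] Dsum_uminus[of g b] by simp

lemma Dsum_sum: "finite A \<Longrightarrow> Dsum (\<lambda>y. \<Sum>t\<in>A. f t y) b = (\<Sum>t\<in>A. Dsum (f t) b)"
proof (induction A rule: finite_induct)
  case empty thus ?case by (simp add: Dsum_zero)
next
  case (insert a A) thus ?case by (simp add: Dsum_add)
qed

lemma supp_F1difb: "supp (F1difb b :: _ \<Rightarrow> 'a::comm_ring_1) \<subseteq> Tg b"
proof
  fix b' assume b': "b' \<in> supp (F1difb b :: _ \<Rightarrow> 'a)"
  show "b' \<in> Tg b"
  proof (rule ccontr)
    assume "b' \<notin> Tg b"
    hence "Dsum (\<lambda>y. if b' = y then 1 else (0::'a)) b = Dsum (\<lambda>y. 0::'a) b"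
      by (intro Dsum_cong) auto
    hence "(F1difb b b' :: 'a) = 0" by (simp add: F1difb_Dsum Dsum_zero)
    moreover have "(F1difb b b' :: 'a) \<noteq> 0" using b' by (simp add: supp_def)
    ultimately show False by simp
  qed
qed

lemma if01_mult: "(if P then 1 else 0) * (x::'a::comm_ring_1) = (if P then x else 0)"
  by simp

lemma finite_supp_F1difb: "finite (supp (F1difb b))"
  by (rule finite_subset[OF supp_F1difb finite_Tg])

lemma lin_ext_F1difb: "lin_ext G (F1difb b) c = Dsum (\<lambda>y. G y c) b"
proof -
  have "lin_ext G (F1difb b) c = (\<Sum>b'\<in>Tg b. F1difb b b' * G b' c)"
    by (rule lin_ext_eq_sum[OF finite_Tg supp_F1difb])
  also have "\<dots> = (\<Sum>b'\<in>Tg b. Dsum (\<lambda>y. (if b' = y then 1 else 0) * G b' c) b)"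
    by (simp add: F1difb_Dsum Dsum_multr)
  also have "\<dots> = Dsum (\<lambda>y. \<Sum>b'\<in>Tg b. (if b' = y then 1 else 0) * G b' c) b"
    by (simp add: Dsum_sum finite_Tg)
  also have "\<dots> = Dsum (\<lambda>y. G y c) b"
    by (rule Dsum_cong) (simp add: finite_Tg if01_mult sum.delta)
  finally show ?thesis .
qed

lemma mergeAt_Cons0: "mergeAt 0 (x#y#xs) = (x+y)#xs"
  by (simp add: mergeAt_def)

lemma mergeAt_Suc: "mergeAt (Suc p) (x#xs) = x # mergeAt p xs"
  by (simp add: mergeAt_def)

lemma mergeAt_zj: "mergeAt p ((j+k)#J) = zj j (mergeAt p (k#J))"
  by (cases p) (simp_all add: mergeAt_def)

lemma splitAt_Suc: "splitAt (Suc s) a b (x#xs) = x # splitAt s a b xs"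
  by (simp add: splitAt_def)

lemma splitAt_0: "splitAt 0 a b (x#xs) = a # b # xs"
  by (simp add: splitAt_def)

lemma eps_Suc: "eps (Suc s) (x#I) = eps s I"
  by (simp add: eps_def)

lemma D3: "Dsum g ((j + k) # J, I) = Dsum (\<lambda>y. g (Zj j y)) (k # J, I)"
  unfolding Dsum_def
  by (simp add: Zj_def mergeAt_zj)

lemma D1: "Dsum g (j # J, Suc 0 # I) = Dsum (\<lambda>y. g (Fj j y)) (J, I)"
  unfolding Dsum_def prod.case length_Cons sum.lessThan_Suc_shift
  by (simp add: eps_Suc Fj_def mergeAt_Suc splitAt_Suc del: sum.lessThan_Suc)

lemma sum_a_shift: "(\<Sum>a\<in>{Suc 0..<Suc (Suc i)}. f a) = f (Suc 0) + (\<Sum>a\<in>{Suc 0..<Suc i}. (f (Suc a)::'a::comm_ring_1))"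
  apply (subst sum.atLeast_Suc_lessThan[of "Suc 0"])
   apply simp
  apply (subst sum.shift_bounds_Suc_ivl[of _ "Suc 0" "Suc i"])
  apply simp
  done

lemma D2: "Dsum g (j # k # J, Suc (Suc i) # I) =
   sg (Suc i # I) * (g ((j+k)#J, Suc i # I) - g (j#k#J, Suc 0 # Suc i # I))
   + Dsum (\<lambda>y. g (Lj j y)) (k#J, Suc i # I)"
  unfolding Dsum_def prod.case length_Cons sum.lessThan_Suc_shift
  apply (simp only: nth_Cons_0 diff_Suc_1 One_nat_def sum_a_shift sum.lessThan_Suc_shift)
  apply (simp add: eps_Suc Lj_def mergeAt_Suc splitAt_Suc mergeAt_Cons0 splitAt_0 del: sum.lessThan_Suc sum.op_ivl_Suc)
  apply (simp only: sum.lessThan_Suc_shift)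
  apply (simp add: sg_def eps_def power_add algebra_simps mergeAt_Cons0 mergeAt_Suc del: sum.lessThan_Suc sum.op_ivl_Suc)
  done

lemma sum_take_drop: "sum_list (take n xs) + sum_list (drop n (xs::nat list)) = sum_list xs"
  by (metis append_take_drop_id sum_list_append)

lemma mergeAt_expand:
  assumes "Suc p < length J"
  shows "mergeAt p J = take p J @ (J!p + J!Suc p) # drop (Suc (Suc p)) J"
  by (simp add: mergeAt_def numeral_2_eq_2)

lemma J_expand:
  assumes "Suc p < length J"
  shows "J = take p J @ J!p # J!Suc p # drop (Suc (Suc p)) J"
  using assms by (metis Cons_nth_drop_Suc Suc_lessD append_take_drop_id)

lemma mergeAt_props:
  assumes "Suc p < length J"
  shows "sum_list (mergeAt p J) = sum_list J" "length (mergeAt p J) = length J - 1"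
    "(\<forall>x\<in>set J. 1 \<le> x) \<Longrightarrow> (\<forall>x\<in>set (mergeAt p J). (1::nat) \<le> x)"
proof -
  note e = J_expand[OF assms] mergeAt_expand[OF assms]
  show "sum_list (mergeAt p J) = sum_list J"
    by (subst (2) e(1)) (simp add: e(2))
  show "length (mergeAt p J) = length J - 1"
    using assms by (simp add: e(2))
  show "(\<forall>x\<in>set J. 1 \<le> x) \<Longrightarrow> (\<forall>x\<in>set (mergeAt p J). 1 \<le> x)"
  proof -
    assume h: "\<forall>x\<in>set J. 1 \<le> x"
    have "J!p \<in> set J" using assms by simp
    hence "1 \<le> J!p" using h by blast
    thus ?thesis using h by (auto simp: e(2) dest: in_set_takeD in_set_dropD)
  qed
qed

lemma splitAt_expand:
  "splitAt s a b I = take s I @ a # b # drop (Suc s) I"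
  by (simp add: splitAt_def)

lemma I_expand: "s < length I \<Longrightarrow> I = take s I @ I!s # drop (Suc s) I"
  by (simp add: id_take_nth_drop)

lemma sum_list_split:
  assumes "s < length I" "a + b = I!s"
  shows "sum_list (splitAt s a b I) = sum_list (I::nat list)"
  by (subst (2) I_expand[OF assms(1)]) (simp add: splitAt_expand assms(2))

lemma sum_expand: "s < length I \<Longrightarrow> sum_list (I::nat list) = sum_list (take s I) + I!s + sum_list (drop (Suc s) I)"
  by (metis I_expand add.assoc sum_list.Cons sum_list_append)

lemma sum_take_le: "sum_list (take s I) + I!s \<le> sum_list (I::nat list)" if "s < length I"
proof -
  have "I = take s I @ I!s # drop (Suc s) I" using that by (rule I_expand)
  hence "sum_list I = sum_list (take s I) + I!s + sum_list (drop (Suc s) I)"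
    by (metis add.assoc sum_list.Cons sum_list_append)
  thus ?thesis by simp
qed

lemma sum_list_upd:
  assumes "s < length I" "1 \<le> I!s"
  shows "sum_list (I[s := I!s - 1]) = sum_list (I::nat list) - 1"
    "sum_list (I::nat list) \<ge> 1"
proof -
  have e: "I[s := I!s - 1] = take s I @ (I!s - 1) # drop (Suc s) I"
    using assms by (simp add: upd_conv_take_nth_drop)
  show "sum_list (I[s := I!s - 1]) = sum_list I - 1"
    unfolding e using assms by (simp add: sum_expand[OF assms(1)])
  show "sum_list I \<ge> 1"
    using assms by (simp add: sum_expand[OF assms(1)])
qed

lemma Tg_basis:
  assumes b: "b \<in> F1basis N"
  shows "Tg b \<subseteq> F1basis N"
proof
  fix y assume y: "y \<in> Tg b"
  obtain J I where bJI: "b = (J, I)" by (cases b)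
  have J1: "\<forall>j\<in>set J. 1 \<le> j" and sJ: "sum_list J = N" and In: "I \<noteq> []"
    and I1: "\<forall>i\<in>set I. 1 \<le> i" and sI: "sum_list I = length J"
    using b by (auto simp: F1basis_def bJI)
  from y obtain s where s: "s < length I" and
    y': "y \<in> ((\<lambda>r. (mergeAt (sum_list (take s I) + r) J, I[s := I ! s - 1])) ` {..<I ! s - 1})
        \<union> ((\<lambda>a. (J, splitAt s a (I ! s - a) I)) ` {1..<I ! s})"
    by (auto simp: Tg_def bJI)
  have Is: "I!s \<in> set I" using s by simp
  show "y \<in> F1basis N"
  proof (cases "y \<in> (\<lambda>r. (mergeAt (sum_list (take s I) + r) J, I[s := I ! s - 1])) ` {..<I ! s - 1}")
    case True
    then obtain r where r: "r < I!s - 1" and yr: "y = (mergeAt (sum_list (take s I) + r) J, I[s := I ! s - 1])"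
      by auto
    have p: "Suc (sum_list (take s I) + r) < length J"
      using sum_take_le[OF s] r sI by linarith
    note mp = mergeAt_props[OF p]
    have u: "sum_list (I[s := I ! s - 1]) = sum_list I - 1"
      using sum_list_upd[OF s] r by linarith
    have "\<forall>i\<in>set (I[s := I ! s - 1]). 1 \<le> i"
      using I1 r by (auto dest!: set_update_subset_insert[THEN subsetD])
    moreover have "I[s := I ! s - 1] \<noteq> []" using In by simp
    ultimately show ?thesis
      using mp J1 sJ u sI by (simp add: F1basis_def yr)
  next
    case False
    then obtain a where a: "1 \<le> a" "a < I!s" and ya: "y = (J, splitAt s a (I ! s - a) I)"
      using y' by auto
    have "sum_list (splitAt s a (I ! s - a) I) = sum_list I"
      using a s by (intro sum_list_split) auto
    moreover have "\<forall>i\<in>set (splitAt s a (I ! s - a) I). 1 \<le> i"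
      using I1 a by (auto simp: splitAt_expand dest: in_set_takeD in_set_dropD)
    ultimately show ?thesis
      using J1 sJ sI by (simp add: F1basis_def ya splitAt_expand)
  qed
qed

lemma neg_pow_pred: "1 \<le> n \<Longrightarrow> (-1::'a::comm_ring_1) ^ (n - 1) = - ((-1) ^ n)"
  by (cases n) auto

lemma neg_pow_pred': "Suc 0 \<le> n \<Longrightarrow> (-1::'a::comm_ring_1) ^ (n - Suc 0) = - ((-1) ^ n)"
  by (cases n) auto

lemma sg_Tg:
  assumes b: "b \<in> F1basis N" and y: "y \<in> Tg b"
  shows "(sg (snd y) :: 'a::comm_ring_1) = - sg (snd b)"
proof -
  obtain J I where bJI: "b = (J, I)" by (cases b)
  have I1: "\<forall>i\<in>set I. 1 \<le> i"
    using b by (auto simp: F1basis_def bJI)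
  let ?f = "\<lambda>i::nat. i - 1"
  from y obtain s where s: "s < length I" and
    y': "y \<in> ((\<lambda>r. (mergeAt (sum_list (take s I) + r) J, I[s := I ! s - 1])) ` {..<I ! s - 1})
        \<union> ((\<lambda>a. (J, splitAt s a (I ! s - a) I)) ` {1..<I ! s})"
    by (auto simp: Tg_def bJI)
  have Is: "1 \<le> I!s" using s I1 by simp
  have S: "sum_list (map ?f I) = sum_list (map ?f (take s I)) + (I!s - 1) + sum_list (map ?f (drop (Suc s) I))"
    by (subst I_expand[OF s]) simp
  show ?thesis
  proof (cases "y \<in> (\<lambda>r. (mergeAt (sum_list (take s I) + r) J, I[s := I ! s - 1])) ` {..<I ! s - 1}")
    case True
    then obtain r where r: "r < I!s - 1" and yr: "y = (mergeAt (sum_list (take s I) + r) J, I[s := I ! s - 1])"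
      by auto
    have e: "I[s := I ! s - 1] = take s I @ (I!s - 1) # drop (Suc s) I"
      using s by (simp add: upd_conv_take_nth_drop)
    have "sum_list (map ?f (I[s := I ! s - 1])) = sum_list (map ?f (take s I)) + (I!s - 1 - 1) + sum_list (map ?f (drop (Suc s) I))"
      unfolding e by simp
    hence "sum_list (map ?f (I[s := I ! s - 1])) = sum_list (map ?f I) - 1"
      using S r by linarith
    moreover have "sum_list (map ?f I) \<ge> 1" using S r by simp
    ultimately show ?thesis
      by (simp add: yr bJI sg_def neg_pow_pred neg_pow_pred')
  next
    case False
    then obtain a where a: "1 \<le> a" "a < I!s" and ya: "y = (J, splitAt s a (I ! s - a) I)"
      using y' by auto
    have "sum_list (map ?f (splitAt s a (I ! s - a) I)) = sum_list (map ?f (take s I)) + (a - 1) + (I!s - a - 1) + sum_list (map ?f (drop (Suc s) I))"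
      unfolding splitAt_expand by simp
    hence "sum_list (map ?f (splitAt s a (I ! s - a) I)) = sum_list (map ?f I) - 1"
      using S a by linarith
    moreover have "sum_list (map ?f I) \<ge> 1" using S a by simp
    ultimately show ?thesis
      by (simp add: ya bJI sg_def neg_pow_pred neg_pow_pred')
  qed
qed

lemma basis_shape:
  assumes "b \<in> F1basis N"
  shows "\<exists>k J i I. b = (k#J, i#I) \<and> 1 \<le> i"
proof -
  obtain J I where bJI: "b = (J, I)" by (cases b)
  have "I \<noteq> []" "\<forall>i\<in>set I. 1 \<le> i" "sum_list I = length J"
    using assms by (auto simp: F1basis_def bJI)
  then obtain i I' where I: "I = i # I'" "1 \<le> i" by (cases I) auto
  hence "J \<noteq> []" using \<open>sum_list I = length J\<close> by auto
  thus ?thesis using I bJI by (cases J) auto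
qed

lemma F1basis_cases:
  assumes "(J, I) \<in> F1basis N"
  obtains (base) j where "J = [j]" "I = [Suc 0]" "N = j" "1 \<le> j"
  | (F) j k J' i I' where "J = j#k#J'" "I = Suc 0 # i # I'" "(k#J', i#I') \<in> F1basis (N - j)" "1 \<le> j" "j \<le> N"
  | (L) j k J' i I' where "J = j#k#J'" "I = Suc (Suc i) # I'" "(k#J', Suc i # I') \<in> F1basis (N - j)" "1 \<le> j" "j \<le> N"
proof -
  have J1: "\<forall>j\<in>set J. 1 \<le> j" and sJ: "sum_list J = N" and In: "I \<noteq> []"
    and I1: "\<forall>i\<in>set I. 1 \<le> i" and sI: "sum_list I = length J"
    using assms by (auto simp: F1basis_def)
  obtain i0 I0 where I: "I = i0 # I0" using In by (cases I) auto
  have "J \<noteq> []" using sI I I1 by auto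
  then obtain j J0 where J: "J = j # J0" by (cases J) auto
  show ?thesis
  proof (cases J0)
    case Nil
    hence "sum_list I = 1" using sI J by simp
    hence "I = [Suc 0]" using I I1 by (cases I0) auto
    thus ?thesis using base J Nil sJ J1 by simp
  next
    case (Cons k J')
    show ?thesis
    proof (cases "i0 = Suc 0")
      case True
      have "I0 \<noteq> []" using sI I J Cons True by auto
      then obtain i I' where I0: "I0 = i # I'" by (cases I0) auto
      have "(k#J', i#I') \<in> F1basis (N - j)"
        using J1 sJ I1 sI unfolding F1basis_def I I0 J Cons True by simp
      thus ?thesis using F[of j k J' i I'] J Cons I I0 True J1 sJ by auto
    next
      case False
      have "i0 \<ge> 2" using I I1 False by auto
      then obtain i where i0: "i0 = Suc (Suc i)" by (metis add_2_eq_Suc le_add_diff_inverse)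
      have "(k#J', Suc i # I0) \<in> F1basis (N - j)"
        using J1 sJ I1 sI unfolding F1basis_def I i0 J Cons by simp
      thus ?thesis using L[of j k J' i I0] J Cons I i0 J1 sJ by auto
    qed
  qed
qed


fun Hl :: "nat list \<times> nat list \<Rightarrow> ('a::comm_ring_1 \<times> (nat list \<times> nat list)) list" where
  "Hl (j # k # J, Suc 0 # i # I) =
     (sg (i # I), (j # k # J, Suc i # I)) # map (\<lambda>(r, y). (r, Zj j y)) (Hl (k # J, i # I))"
| "Hl _ = []"

definition Hsum :: "(nat list \<times> nat list \<Rightarrow> 'a::comm_ring_1) \<Rightarrow> nat list \<times> nat list \<Rightarrow> 'a" where
  "Hsum \<phi> x = (\<Sum>(r, y)\<leftarrow>Hl x. r * \<phi> y)"

lemma sum_map_Z: "(\<Sum>(r, y)\<leftarrow>map (\<lambda>(r, y). (r, Z y)) xs. r * \<phi> y) = (\<Sum>(r, y)\<leftarrow>xs. r * (\<phi> (Z y) :: 'a::comm_ring_1))"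
  by (induction xs) auto

lemma HsumF: "Hsum \<phi> (j # k # J, Suc 0 # i # I) =
   sg (i # I) * \<phi> (j # k # J, Suc i # I) + Hsum (\<lambda>y. \<phi> (Zj j y)) (k # J, i # I)"
  by (simp add: Hsum_def sum_map_Z del: map_map)

lemma Hl_L: "Hl (J, Suc (Suc i) # I) = []"
  by (cases "(J, Suc (Suc i) # I)" rule: Hl.cases) auto

lemma Hl_single: "Hl ([j], I) = []"
  by (cases "([j], I)" rule: Hl.cases) auto

lemma zj_zj: "zj j (zj k xs) = zj (j + k) xs"
  by (cases xs) auto

lemma Zj_Zj: "Zj j (Zj k y) = Zj (j + k) y"
  by (simp add: Zj_def zj_zj)

lemma Hl_Z: "(Hl (Zj j (k # J, I)) :: ('a::comm_ring_1 \<times> _) list) = map (\<lambda>(r, y). (r, Zj j y)) (Hl (k # J, I))"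
proof (cases "\<exists>k2 J' i I'. J = k2 # J' \<and> I = Suc 0 # i # I'")
  case True
  then obtain k2 J' i I' where e: "J = k2 # J'" "I = Suc 0 # i # I'" by blast
  show ?thesis by (simp add: e Zj_def o_def case_prod_beta zj_zj[symmetric] add.commute)
next
  case False
  have "(Hl (k # J, I) :: ('a \<times> _) list) = []" using False
    by (cases "(k # J, I)" rule: Hl.cases) auto
  moreover have "(Hl (Zj j (k # J, I)) :: ('a \<times> _) list) = []" using False
    by (cases "Zj j (k # J, I)" rule: Hl.cases) (auto simp: Zj_def)
  ultimately show ?thesis by simp
qed

lemma HsumZ: "Hsum \<phi> (Zj j (k # J, I)) = Hsum (\<lambda>y. \<phi> (Zj j y)) (k # J, I)"
  by (simp add: Hsum_def Hl_Z sum_map_Z del: map_map)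

lemma Hl_fst: "p \<in> set (Hl b) \<Longrightarrow> fst (snd p) \<noteq> []"
proof (induction b arbitrary: p rule: Hl.induct)
  case (1 j k J i I)
  thus ?case by (auto simp: Zj_def, metis zj.elims list.distinct(1))
qed auto

lemma sg_sq: "sg I * sg I = (1::'a::comm_ring_1)"
  by (simp add: sg_def power_mult_distrib[symmetric])


lemma DZ: "fst y \<noteq> [] \<Longrightarrow> Dsum \<phi> (Zj j y) = Dsum (\<lambda>z. \<phi> (Zj j z)) y"
proof -
  assume h: "fst y \<noteq> []"
  obtain J I where y: "y = (J, I)" by (cases y)
  obtain k J' where J: "J = k # J'" using h y by (cases J) auto
  have "Zj j y = ((j + k) # J', I)" by (simp add: Zj_def y J)
  thus ?thesis using D3[of \<phi> j k J' I] y J by simp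
qed

lemma basis_shape2:
  assumes "y \<in> F1basis N"
  obtains k2 J2 i2 I2 where "y = (k2 # J2, Suc i2 # I2)"
proof -
  from basis_shape[OF assms] obtain k J i I where "y = (k#J, i#I)" "1 \<le> i" by blast
  thus ?thesis using that by (cases i) auto
qed

lemma E_lemma:
  assumes "b \<in> F1basis N"
  shows "(\<Sum>(r,y)\<leftarrow>Hl b. r * Dsum \<phi> y) + Dsum (Hsum \<phi>) b =
    (if \<forall>i\<in>set (snd b). i = 1 then \<phi> ([sum_list (fst b)], [1]) else 0) - (\<phi> b :: 'a::comm_ring_1)"
  using assms
proof (induction "length (fst b)" arbitrary: b N \<phi> rule: less_induct)
  case less
  obtain J I where bJI: "b = (J, I)" by (cases b)
  from less.prems[unfolded bJI] show ?case
  proof (cases rule: F1basis_cases)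
    case (base j)
    then show ?thesis by (simp add: bJI Hl_single Dsum_def)
  next
    case (F j k J' i I')
    let ?c = "(k # J', i # I')"
    let ?\<phi>' = "\<lambda>z. \<phi> (Zj j z)"
    have cB: "?c \<in> F1basis (N - j)" by fact
    have "1 \<le> i" using cB by (auto simp: F1basis_def)
    then obtain i0 where i: "i = Suc i0" by (cases i) auto
    have IH: "(\<Sum>(r,y)\<leftarrow>Hl ?c. r * Dsum ?\<phi>' y) + Dsum (Hsum ?\<phi>') ?c =
      (if \<forall>i\<in>set (i # I'). i = 1 then ?\<phi>' ([sum_list (k # J')], [1]) else 0) - ?\<phi>' ?c"
      using less(1)[of ?c "N - j" ?\<phi>'] cB F bJI by simp
    let ?s = "sg (i # I') :: 'a"
    have hl: "Hl b = (?s, (j # k # J', Suc i # I')) # map (\<lambda>(r, y). (r, Zj j y)) (Hl ?c)"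
      using F bJI by simp
    have S1: "(\<Sum>(r,y)\<leftarrow>Hl b. r * Dsum \<phi> y) = ?s * Dsum \<phi> (j # k # J', Suc i # I')
        + (\<Sum>(r,y)\<leftarrow>Hl ?c. r * Dsum ?\<phi>' y)"
    proof -
      have "(\<Sum>(r,y)\<leftarrow>Hl b. r * Dsum \<phi> y) = ?s * Dsum \<phi> (j # k # J', Suc i # I')
        + (\<Sum>(r,y)\<leftarrow>Hl ?c. r * Dsum \<phi> (Zj j y))"
        by (simp add: hl sum_map_Z[where \<phi>="Dsum \<phi>"] del: map_map)
      also have "(\<Sum>(r,y)\<leftarrow>Hl ?c. r * Dsum \<phi> (Zj j y)) = (\<Sum>(r,y)\<leftarrow>Hl ?c. r * Dsum ?\<phi>' y)"
        by (rule arg_cong[where f=sum_list], rule map_cong[OF refl]) (auto simp: DZ dest: Hl_fst)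
      finally show ?thesis .
    qed
    have D2': "Dsum \<phi> (j # k # J', Suc i # I') =
       ?s * (\<phi> ((j+k)#J', i # I') - \<phi> (j#k#J', Suc 0 # i # I')) + Dsum (\<lambda>y. \<phi> (Lj j y)) ?c"
      using D2[of \<phi> j k J' i0 I'] by (simp add: i)
    have S2: "Dsum (Hsum \<phi>) b = - ?s * Dsum (\<lambda>y. \<phi> (Lj j y)) ?c + Dsum (Hsum ?\<phi>') ?c"
    proof -
      have "Dsum (Hsum \<phi>) b = Dsum (\<lambda>y. Hsum \<phi> (Fj j y)) ?c"
        using F bJI by (simp add: D1)
      also have "\<dots> = Dsum (\<lambda>y. - ?s * \<phi> (Lj j y) + Hsum ?\<phi>' y) ?c"
      proof (rule Dsum_cong)
        fix y assume yT: "y \<in> Tg ?c"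
        hence yB: "y \<in> F1basis (N - j)" using Tg_basis[OF cB] by blast
        obtain k2 J2 i2 I2 where y: "y = (k2 # J2, Suc i2 # I2)" using basis_shape2[OF yB] .
        have "sg (snd y) = - ?s" using sg_Tg[OF cB yT] by simp
        thus "Hsum \<phi> (Fj j y) = - ?s * \<phi> (Lj j y) + Hsum ?\<phi>' y"
          by (simp add: y Fj_def Lj_def HsumF)
      qed
      also have "\<dots> = - ?s * Dsum (\<lambda>y. \<phi> (Lj j y)) ?c + Dsum (Hsum ?\<phi>') ?c"
        by (subst Dsum_add, subst Dsum_cmult) (rule refl)
      finally show ?thesis .
    qed
    have ss: "?s * ?s = 1" by (rule sg_sq)
    have zc: "?\<phi>' ?c = \<phi> ((j+k)#J', i # I')" by (simp add: Zj_def)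
    have z1: "?\<phi>' ([sum_list (k # J')], [1]) = \<phi> ([sum_list (j # k # J')], [1])" by (simp add: Zj_def)
    have "(\<Sum>(r,y)\<leftarrow>Hl b. r * Dsum \<phi> y) + Dsum (Hsum \<phi>) b
       = ?s * ?s * (\<phi> ((j+k)#J', i # I') - \<phi> (j#k#J', Suc 0 # i # I'))
         + ((\<Sum>(r,y)\<leftarrow>Hl ?c. r * Dsum ?\<phi>' y) + Dsum (Hsum ?\<phi>') ?c)"
      unfolding S1 S2 D2' by (simp add: algebra_simps)
    also have "\<dots> = (if \<forall>i\<in>set (i # I'). i = 1 then \<phi> ([sum_list (j # k # J')], [1]) else 0) - \<phi> (j#k#J', Suc 0 # i # I')"
      unfolding IH ss zc z1 by simp
    finally show ?thesis using F bJI by simp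
  next
    case (L j k J' i I')
    let ?c = "(k # J', Suc i # I')"
    let ?\<phi>' = "\<lambda>z. \<phi> (Zj j z)"
    let ?s = "sg (Suc i # I') :: 'a"
    have cB: "?c \<in> F1basis (N - j)" by fact
    have hl: "Hl b = ([] :: ('a \<times> _) list)" using L bJI by (simp add: Hl_L)
    have "Dsum (Hsum \<phi>) b = ?s * (Hsum \<phi> ((j+k)#J', Suc i # I') - Hsum \<phi> (j#k#J', Suc 0 # Suc i # I'))
       + Dsum (\<lambda>y. Hsum \<phi> (Lj j y)) ?c"
      using L bJI by (simp add: D2)
    also have "Dsum (\<lambda>y. Hsum \<phi> (Lj j y)) ?c = Dsum (\<lambda>y. 0) ?c"
    proof (rule Dsum_cong)
      fix y assume yT: "y \<in> Tg ?c"
      hence yB: "y \<in> F1basis (N - j)" using Tg_basis[OF cB] by blast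
      obtain k2 J2 i2 I2 where y: "y = (k2 # J2, Suc i2 # I2)" using basis_shape2[OF yB] .
      show "Hsum \<phi> (Lj j y) = 0" by (simp add: y Lj_def Hsum_def Hl_L)
    qed
    also have "Hsum \<phi> ((j+k)#J', Suc i # I') = Hsum ?\<phi>' ?c"
      using HsumZ[of \<phi> j k J' "Suc i # I'"] by (simp add: Zj_def)
    also have "Hsum \<phi> (j#k#J', Suc 0 # Suc i # I') = ?s * \<phi> (j#k#J', Suc (Suc i) # I') + Hsum ?\<phi>' ?c"
      by (rule HsumF)
    finally have "Dsum (Hsum \<phi>) b = - (?s * ?s) * \<phi> (j#k#J', Suc (Suc i) # I')"
      by (simp add: Dsum_zero algebra_simps)
    thus ?thesis using L bJI hl by (simp add: sg_sq)
  qed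
qed


lemma DP:
  assumes "b \<in> F1basis N"
  shows "Dsum (\<lambda>y. if \<forall>i\<in>set (snd y). i = 1 then \<psi> (sum_list (fst y)) else (0::'a::comm_ring_1)) b = 0"
  using assms
proof (induction "length (fst b)" arbitrary: b N \<psi> rule: less_induct)
  case less
  obtain J I where bJI: "b = (J, I)" by (cases b)
  from less.prems[unfolded bJI] show ?case
  proof (cases rule: F1basis_cases)
    case (base j)
    then show ?thesis by (simp add: bJI Dsum_def)
  next
    case (F j k J' i I')
    let ?c = "(k # J', i # I')"
    have cB: "?c \<in> F1basis (N - j)" by fact
    have e: "(\<lambda>y. (if \<forall>i\<in>set (snd (Fj j y)). i = 1 then \<psi> (sum_list (fst (Fj j y))) else (0::'a)))
       = (\<lambda>y. if \<forall>i\<in>set (snd y). i = 1 then (\<lambda>s. \<psi> (j + s)) (sum_list (fst y)) else 0)"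
      unfolding Fj_def by (simp cong: if_cong)
    show ?thesis
      using less(1)[of ?c "N - j" "\<lambda>s. \<psi> (j + s)"] cB F bJI
      by (simp add: D1 e del: One_nat_def)
  next
    case (L j k J' i I')
    let ?c = "(k # J', Suc i # I')"
    have cB: "?c \<in> F1basis (N - j)" by fact
    have z: "Dsum (\<lambda>y. if \<forall>i\<in>set (snd (Lj j y)). i = 1 then \<psi> (sum_list (fst (Lj j y))) else (0::'a)) ?c
        = Dsum (\<lambda>y. 0) ?c"
    proof (rule Dsum_cong)
      fix y assume yT: "y \<in> Tg ?c"
      hence yB: "y \<in> F1basis (N - j)" using Tg_basis[OF cB] by blast
      obtain k2 J2 i2 I2 where y: "y = (k2 # J2, Suc i2 # I2)" using basis_shape2[OF yB] .
      show "(if \<forall>i\<in>set (snd (Lj j y)). i = 1 then \<psi> (sum_list (fst (Lj j y))) else (0::'a)) = 0"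
        by (simp add: y Lj_def)
    qed
    show ?thesis using L bJI by (simp add: D2 z Dsum_zero add.assoc del: One_nat_def)
  qed
qed

definition dgF :: "nat list \<times> nat list \<Rightarrow> int" where
  "dgF b = int (length (snd b)) - int (sum_list (snd b))"

lemma Hl_basis:
  assumes "b \<in> F1basis N" "p \<in> set (Hl b)"
  shows "snd p \<in> F1basis N \<and> dgF (snd p) = dgF b - 1"
  using assms
proof (induction b arbitrary: N p rule: Hl.induct)
  case (1 j k J i I)
  let ?c = "(k # J, i # I)"
  have b: "(j # k # J, Suc 0 # i # I) \<in> F1basis N" by fact
  have cB: "?c \<in> F1basis (N - j)" and jN: "j \<le> N" "1 \<le> j"
    using b by (auto simp: F1basis_def)
  from "1.prems"(2) consider "p = (sg (i # I), (j # k # J, Suc i # I))"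
    | q where "q \<in> set (Hl ?c)" "p = (fst q, Zj j (snd q))"
    by auto
  thus ?case
  proof cases
    case 1
    thus ?thesis using b by (auto simp: F1basis_def dgF_def)
  next
    case (2 q)
    have IH: "snd q \<in> F1basis (N - j) \<and> dgF (snd q) = dgF ?c - 1"
      using "1.IH"[OF cB 2(1)] .
    obtain k2 J2 i2 I2 where y: "snd q = (k2 # J2, Suc i2 # I2)" using basis_shape2 IH by blast
    have "Zj j (snd q) \<in> F1basis N" using IH jN by (auto simp: y Zj_def F1basis_def)
    moreover have "dgF (Zj j (snd q)) = dgF (j # k # J, Suc 0 # i # I) - 1"
      using IH by (simp add: Zj_def dgF_def)
    ultimately show ?thesis using 2 by simp
  qed
qed auto

definition actF :: "nat list \<Rightarrow> nat list \<times> nat list \<Rightarrow> nat list \<times> nat list" where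
  "actF as b = (blocks as (fst b), snd b)"

lemma blocks_zj: "blocks as (zj j J) = zj (sum_list (take j as)) (blocks (drop j as) J)"
proof (cases J)
  case Nil thus ?thesis by simp
next
  case (Cons a list)
  have "drop a (drop j as) = drop (j + a) as" by (simp add: add.commute)
  thus ?thesis using Cons by (simp add: take_add)
qed

lemma actF_Zj: "actF as (Zj j y) = Zj (sum_list (take j as)) (actF (drop j as) y)"
  by (simp add: actF_def Zj_def blocks_zj)

lemma Hl_act: "Hl (actF as b) = map (\<lambda>(r, y). (r, actF as y)) (Hl b)"
proof (induction b arbitrary: as rule: Hl.induct)
  case (1 j k J i I)
  have e: "actF as (j # k # J, Suc 0 # i # I) =
     (sum_list (take j as) # sum_list (take k (drop j as)) # blocks (drop k (drop j as)) J, Suc 0 # i # I)"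
    by (simp add: actF_def)
  have e2: "(sum_list (take k (drop j as)) # blocks (drop k (drop j as)) J, i # I) = actF (drop j as) (k # J, i # I)"
    by (simp add: actF_def)
  have e3: "actF as (j # k # J, Suc i # I) =
     (sum_list (take j as) # sum_list (take k (drop j as)) # blocks (drop k (drop j as)) J, Suc i # I)"
    by (simp add: actF_def)
  let ?R = "blocks (drop k (drop j as)) J"
  let ?s1 = "sum_list (take j as)" and ?s2 = "sum_list (take k (drop j as))"
  have h1: "(Hl (actF as (j # k # J, Suc 0 # i # I)) :: ('a \<times> _) list) = (sg (i#I), (?s1 # ?s2 # ?R, Suc i # I)) # map (\<lambda>(r,y). (r, Zj ?s1 y)) (Hl (?s2 # ?R, i # I))"
    unfolding e by (rule Hl.simps(1))
  have h2: "(Hl (?s2 # ?R, i # I) :: ('a \<times> _) list) = map (\<lambda>(r,y). (r, actF (drop j as) y)) (Hl (k # J, i # I))"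
    using "1.IH"[of "drop j as"] by (simp add: actF_def)
  show ?case
    unfolding h1 h2 by (simp add: e3 actF_Zj case_prod_beta)
qed (auto simp: actF_def)


lemma finite_supp_delta: "finite (supp (\<lambda>c. if X = c then 1 else (0::'a::comm_ring_1)))"
proof -
  have "supp (\<lambda>c. if X = c then 1 else (0::'a)) \<subseteq> {X}" by (auto simp: supp_def)
  thus ?thesis by (rule finite_subset) simp
qed

lemma is_lmod_map_lin_ext:
  fixes M :: "('b, 'a::comm_ring_1) dgmod" and Q :: "('c, 'a) dgmod"
  assumes fin: "\<And>n b. b \<in> bas M n \<Longrightarrow> finite (supp (G b))"
  and sub: "\<And>n b. b \<in> bas M n \<Longrightarrow> supp (G b) \<subseteq> bas Q n"
  and deg: "\<And>n b. b \<in> bas M n \<Longrightarrow> supp (G b) \<subseteq> {c. dg Q c = dg M b + t}"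
  and act: "\<And>n as b. b \<in> bas M n \<Longrightarrow> length as = n \<Longrightarrow> (\<forall>a\<in>set as. 1 \<le> a) \<Longrightarrow>
              G (actb M as b) = lact Q as (G b)"
  shows "is_lmod_map M Q t (\<lambda>n. lin_ext G)"
  unfolding is_lmod_map_def
proof (intro allI conjI ballI impI)
  fix n and x :: "'b \<Rightarrow> 'a" assume x: "x \<in> elems (bas M n)"
  hence fx: "finite (supp x)" and sx: "supp x \<subseteq> bas M n" by (auto simp: elems_def)
  have fG: "\<forall>b\<in>supp x. finite (supp (G b))" using fin sx by blast
  show "lin_ext G x \<in> elems (bas Q n)"
    unfolding elems_def using finite_supp_lin_ext[OF fx fG] supp_lin_ext[of G x] sub sx by blast
  show "\<And>r. lin_ext G (\<lambda>b. r * x b) = (\<lambda>c. r * lin_ext G x c)"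
    by (rule lin_ext_smult[OF fx])
  {
    fix y :: "'b \<Rightarrow> 'a" assume "y \<in> elems (bas M n)"
    hence "finite (supp y)" by (auto simp: elems_def)
    thus "lin_ext G (\<lambda>b. x b + y b) = (\<lambda>c. lin_ext G x c + lin_ext G y c)"
      by (rule lin_ext_add[OF fx])
  }
  {
    fix d assume "homog M d x"
    hence "supp x \<subseteq> {b. dg M b = d}" by (simp add: homog_def)
    hence "supp (lin_ext G x) \<subseteq> {c. dg Q c = d + t}"
      using supp_lin_ext[of G x] deg sx by fastforce
    thus "homog Q (d + t) (lin_ext G x)" by (simp add: homog_def)
  }
  {
    fix as :: "nat list" assume h: "length as = n \<and> (\<forall>a\<in>set as. 1 \<le> a)"
    have "lin_ext G (lact M as x) = lin_ext (\<lambda>b. lin_ext G (\<lambda>c. if actb M as b = c then 1 else 0)) x"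
      unfolding lact_def by (rule lin_ext_comp) (use fx finite_supp_delta in auto)
    also have "\<dots> = lin_ext (\<lambda>b. G (actb M as b)) x" by (simp add: lin_ext_delta')
    also have "\<dots> = lin_ext (\<lambda>b. lact Q as (G b)) x"
      using act h sx by (intro lin_ext_cong) auto
    also have "\<dots> = lact Q as (lin_ext G x)"
      unfolding lact_def by (rule lin_ext_comp[symmetric, OF fx fG])
    finally show "lin_ext G (lact M as x) = lact Q as (lin_ext G x)" .
  }
qed


definition Pb :: "nat list \<times> nat list \<Rightarrow> nat \<Rightarrow> 'a::comm_ring_1" where
  "Pb = (\<lambda>(J, I) N. if (\<forall>i\<in>set I. i = 1) \<and> N = sum_list J then 1 else 0)"
definition Bb :: "nat \<Rightarrow> nat list \<times> nat list \<Rightarrow> 'a::comm_ring_1" where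
  "Bb = (\<lambda>N b. if b = ([N], [1]) then 1 else 0)"
definition Hb :: "nat list \<times> nat list \<Rightarrow> nat list \<times> nat list \<Rightarrow> 'a::comm_ring_1" where
  "Hb b = sd (Hl b)"

lemma pmap_eq: "(pmap :: nat \<Rightarrow> (nat list \<times> nat list \<Rightarrow> 'a::comm_ring_1) \<Rightarrow> nat \<Rightarrow> 'a) = (\<lambda>n. lin_ext Pb)"
  by (rule ext) (simp add: pmap_def Pb_def)

lemma betamap_eq: "(betamap :: nat \<Rightarrow> (nat \<Rightarrow> 'a::comm_ring_1) \<Rightarrow> nat list \<times> nat list \<Rightarrow> 'a) = (\<lambda>n. lin_ext Bb)"
  by (rule ext) (simp add: betamap_def Bb_def)

lemma F1Mod_simps:
  "bas F1Mod = F1basis" "dg F1Mod = (\<lambda>(J, I). int (length I) - int (sum_list I))"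
  "actb F1Mod = (\<lambda>as (J, I). (blocks as J, I))" "difb F1Mod = F1difb"
  by (simp_all add: F1Mod_def)

lemma AsMod_simps:
  "bas AsMod = (\<lambda>N. if 1 \<le> N then {N} else {})" "dg AsMod = (\<lambda>_. 0)"
  "actb AsMod = (\<lambda>as N. sum_list as)" "difb AsMod = (\<lambda>_ _. 0)"
  by (simp_all add: AsMod_def)

lemma basis_pos: "b \<in> F1basis n \<Longrightarrow> 1 \<le> n"
proof -
  assume "b \<in> F1basis n"
  then obtain k J i I where b: "b = (k#J, i#I)" and "1 \<le> i" using basis_shape by blast
  thus "1 \<le> n" using \<open>b \<in> F1basis n\<close> by (auto simp: F1basis_def)
qed

lemma sum_blocks: "sum_list (blocks as J) = sum_list (take (sum_list J) as)"
  by (induction J arbitrary: as) (simp_all add: take_add)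

lemma allones_sum: "\<forall>i\<in>set I. i = 1 \<Longrightarrow> sum_list I = length (I::nat list)"
  by (induction I) auto

lemma Pb_cases: "Pb (J, I) = (if \<forall>i\<in>set I. i = 1 then (\<lambda>N. if N = sum_list J then 1 else 0) else (\<lambda>N. 0))"
  by (simp add: Pb_def fun_eq_iff)

lemma p_lmod: "is_lmod_map (F1Mod :: (nat list \<times> nat list, 'a::comm_ring_1) dgmod) AsMod 0 (\<lambda>n. lin_ext Pb)"
proof (rule is_lmod_map_lin_ext)
  fix n and b :: "nat list \<times> nat list"
  assume b: "b \<in> bas (F1Mod :: (_, 'a) dgmod) n"
  obtain J I where bJI: "b = (J, I)" by (cases b)
  have bB: "(J, I) \<in> F1basis n" using b bJI by (simp add: F1Mod_simps)
  have sJ: "sum_list J = n" using bB by (simp add: F1basis_def)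
  have n1: "1 \<le> n" using basis_pos[OF bB] .
  have sp: "supp (Pb b :: nat \<Rightarrow> 'a) \<subseteq> {n}" by (auto simp: bJI Pb_def supp_def sJ)
  show "finite (supp (Pb b :: nat \<Rightarrow> 'a))" using sp by (rule finite_subset) simp
  show "supp (Pb b :: nat \<Rightarrow> 'a) \<subseteq> bas (AsMod :: (_, 'a) dgmod) n" using sp n1 by (simp add: AsMod_simps)
  show "supp (Pb b :: nat \<Rightarrow> 'a) \<subseteq> {c. dg (AsMod :: (_, 'a) dgmod) c = dg (F1Mod :: (_, 'a) dgmod) b + 0}"
  proof
    fix c assume "c \<in> supp (Pb b :: nat \<Rightarrow> 'a)"
    hence "\<forall>i\<in>set I. i = 1" by (auto simp: bJI Pb_def supp_def split: if_splits)
    thus "c \<in> {c. dg (AsMod :: (_, 'a) dgmod) c = dg (F1Mod :: (_, 'a) dgmod) b + 0}"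
      by (simp add: AsMod_simps F1Mod_simps bJI allones_sum)
  qed
  fix as :: "nat list" assume las: "length as = n"
  have sb: "sum_list (blocks as J) = sum_list as" using las sJ by (simp add: sum_blocks)
  show "Pb (actb (F1Mod :: (_, 'a) dgmod) as b) = lact (AsMod :: (_, 'a) dgmod) as (Pb b)"
  proof (cases "\<forall>i\<in>set I. i = 1")
    case True
    have "lact (AsMod :: (_, 'a) dgmod) as (Pb b) = (\<lambda>c. if sum_list as = c then 1 else 0)"
      using True by (simp add: AsMod_simps bJI Pb_cases lact_def lin_ext_delta)
    moreover have "Pb (actb (F1Mod :: (_, 'a) dgmod) as b) = (\<lambda>N. if N = sum_list as then 1 else (0::'a))"
      using True by (simp add: F1Mod_simps bJI Pb_cases sb)
    ultimately show ?thesis by auto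
  next
    case False
    have 1: "Pb b = (\<lambda>N. 0::'a)" using False by (auto simp: bJI Pb_def fun_eq_iff)
    have 2: "Pb (actb (F1Mod :: (_, 'a) dgmod) as b) = (\<lambda>N. 0::'a)"
      using False by (auto simp: bJI Pb_def F1Mod_simps fun_eq_iff)
    show ?thesis unfolding 1 2 by (simp add: lact_def lin_ext_zero)
  qed
qed

lemma b_lmod: "is_lmod_map (AsMod :: (nat, 'a::comm_ring_1) dgmod) F1Mod 0 (\<lambda>n. lin_ext Bb)"
proof (rule is_lmod_map_lin_ext)
  fix n and b :: nat
  assume b: "b \<in> bas (AsMod :: (_, 'a) dgmod) n"
  hence bn: "b = n" "1 \<le> n" by (auto simp: AsMod_simps split: if_splits)
  have sp: "supp (Bb b :: _ \<Rightarrow> 'a) \<subseteq> {([n], [1])}" by (auto simp: bn Bb_def supp_def)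
  show "finite (supp (Bb b :: _ \<Rightarrow> 'a))" using sp by (rule finite_subset) simp
  show "supp (Bb b :: _ \<Rightarrow> 'a) \<subseteq> bas (F1Mod :: (_, 'a) dgmod) n"
    using sp bn by (auto simp: F1Mod_simps F1basis_def)
  show "supp (Bb b :: _ \<Rightarrow> 'a) \<subseteq> {c. dg (F1Mod :: (_, 'a) dgmod) c = dg (AsMod :: (_, 'a) dgmod) b + 0}"
    using sp by (auto simp: F1Mod_simps AsMod_simps)
  fix as :: "nat list" assume las: "length as = n"
  show "Bb (actb (AsMod :: (_, 'a) dgmod) as b) = lact (F1Mod :: (_, 'a) dgmod) as (Bb b)"
    by (rule ext) (simp add: F1Mod_simps AsMod_simps bn las lact_def Bb_def lin_ext_delta eq_commute)
qed

lemma Dsum_base: "Dsum g ([N], [Suc 0]) = 0"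
  by (simp add: Dsum_def)

lemma p_closed: "closed_map (F1Mod :: (nat list \<times> nat list, 'a::comm_ring_1) dgmod) AsMod pmap"
  unfolding closed_map_def pmap_eq
proof (intro conjI allI ballI)
  show "is_lmod_map (F1Mod :: (nat list \<times> nat list, 'a::comm_ring_1) dgmod) AsMod 0 (\<lambda>n. lin_ext Pb)"
    by (rule p_lmod)
  fix n and x :: "nat list \<times> nat list \<Rightarrow> 'a"
  assume x: "x \<in> elems (bas (F1Mod :: (_, 'a) dgmod) n)"
  hence fx: "finite (supp x)" and sx: "supp x \<subseteq> F1basis n" by (auto simp: elems_def F1Mod_simps)
  have "lin_ext Pb (lin_ext F1difb x) = lin_ext (\<lambda>b. lin_ext Pb (F1difb b)) x"
    by (rule lin_ext_comp[OF fx]) (simp add: finite_supp_F1difb)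
  also have "\<dots> = lin_ext (\<lambda>b c. 0) x"
  proof (rule lin_ext_cong, rule ext)
    fix b c assume "b \<in> supp x"
    hence bB: "b \<in> F1basis n" using sx by blast
    have "lin_ext Pb (F1difb b) c = Dsum (\<lambda>y. Pb y c) b" by (rule lin_ext_F1difb)
    also have "(\<lambda>y. Pb y c) = (\<lambda>y. if \<forall>i\<in>set (snd y). i = 1 then (\<lambda>s. if c = s then 1 else (0::'a)) (sum_list (fst y)) else 0)"
      by (auto simp: Pb_def)
    also have "Dsum \<dots> b = 0" by (rule DP[OF bB])
    finally show "lin_ext Pb (F1difb b) c = (0::'a)" .
  qed
  finally have z: "lin_ext Pb (lin_ext F1difb x) = (\<lambda>c. 0::'a)" by (simp add: lin_ext_zeroF)
  show "dmap F1Mod AsMod 0 (\<lambda>n. lin_ext Pb) n x = (\<lambda>c. 0)"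
    by (simp add: dmap_def dif_def F1Mod_simps AsMod_simps lin_ext_zeroF z)
qed

lemma b_closed: "closed_map (AsMod :: (nat, 'a::comm_ring_1) dgmod) F1Mod betamap"
  unfolding closed_map_def betamap_eq
proof (intro conjI allI ballI)
  show "is_lmod_map (AsMod :: (nat, 'a::comm_ring_1) dgmod) F1Mod 0 (\<lambda>n. lin_ext Bb)"
    by (rule b_lmod)
  fix n and x :: "nat \<Rightarrow> 'a"
  assume x: "x \<in> elems (bas (AsMod :: (_, 'a) dgmod) n)"
  hence fx: "finite (supp x)" by (auto simp: elems_def)
  have "lin_ext F1difb (lin_ext Bb x) = lin_ext (\<lambda>N. lin_ext F1difb (Bb N)) x"
  proof (rule lin_ext_comp[OF fx], intro ballI)
    fix N
    have "supp (Bb N :: _ \<Rightarrow> 'a) \<subseteq> {([N], [1])}" by (auto simp: Bb_def supp_def)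
    thus "finite (supp (Bb N :: _ \<Rightarrow> 'a))" by (rule finite_subset) simp
  qed
  also have "\<dots> = lin_ext (\<lambda>b c. 0) x"
    by (rule lin_ext_cong) (simp add: Bb_def lin_ext_delta F1difb_Dsum Dsum_base)
  finally have z: "lin_ext F1difb (lin_ext Bb x) = (\<lambda>c. 0::'a)" by (simp add: lin_ext_zeroF)
  show "dmap AsMod F1Mod 0 (\<lambda>n. lin_ext Bb) n x = (\<lambda>c. 0)"
    by (simp add: dmap_def dif_def F1Mod_simps AsMod_simps lin_ext_zeroF lin_ext_zero z)
qed

lemma bp_id: "\<forall>n. \<forall>x\<in>elems (bas (AsMod :: (nat, 'a::comm_ring_1) dgmod) n).
              comp_map betamap pmap n x = (idmap n x :: nat \<Rightarrow> 'a)"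
proof (intro allI ballI)
  fix n and x :: "nat \<Rightarrow> 'a"
  assume x: "x \<in> elems (bas (AsMod :: (_, 'a) dgmod) n)"
  hence fx: "finite (supp x)" by (auto simp: elems_def)
  have "lin_ext Pb (lin_ext Bb x) = lin_ext (\<lambda>N. lin_ext Pb (Bb N)) x"
  proof (rule lin_ext_comp[OF fx], intro ballI)
    fix N
    have "supp (Bb N :: _ \<Rightarrow> 'a) \<subseteq> {([N], [1])}" by (auto simp: Bb_def supp_def)
    thus "finite (supp (Bb N :: _ \<Rightarrow> 'a))" by (rule finite_subset) simp
  qed
  also have "\<dots> = lin_ext (\<lambda>b c. if c = b then 1 else 0) x"
    by (rule lin_ext_cong) (simp add: Bb_def lin_ext_delta Pb_def)
  also have "\<dots> = x" by (rule lin_ext_id[OF fx])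
  finally show "comp_map betamap pmap n x = (idmap n x :: nat \<Rightarrow> 'a)"
    by (simp add: comp_map_def idmap_def pmap_eq betamap_eq)
qed


lemma dg_F1: "dg F1Mod x = dgF x"
  by (cases x) (simp add: F1Mod_simps dgF_def)

lemma actb_F1: "actb F1Mod as x = actF as x"
  by (cases x) (simp add: F1Mod_simps actF_def)

lemma h_lmod: "is_lmod_map (F1Mod :: (nat list \<times> nat list, 'a::comm_ring_1) dgmod) F1Mod (-1) (\<lambda>n. lin_ext Hb)"
proof (rule is_lmod_map_lin_ext)
  fix n and b :: "nat list \<times> nat list"
  assume b: "b \<in> bas (F1Mod :: (_, 'a) dgmod) n"
  hence bB: "b \<in> F1basis n" by (simp add: F1Mod_simps)
  show "finite (supp (Hb b :: _ \<Rightarrow> 'a))" by (simp add: Hb_def finite_supp_sd)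
  have sp: "supp (Hb b :: _ \<Rightarrow> 'a) \<subseteq> snd ` set (Hl b :: ('a \<times> _) list)"
    by (simp add: Hb_def supp_sd)
  show "supp (Hb b :: _ \<Rightarrow> 'a) \<subseteq> bas (F1Mod :: (_, 'a) dgmod) n"
    using sp Hl_basis[OF bB] by (force simp: F1Mod_simps)
  show "supp (Hb b :: _ \<Rightarrow> 'a) \<subseteq> {c. dg (F1Mod :: (_, 'a) dgmod) c = dg (F1Mod :: (_, 'a) dgmod) b + -1}"
    using sp Hl_basis[OF bB] by (force simp: dg_F1)
  fix as :: "nat list"
  show "Hb (actb (F1Mod :: (_, 'a) dgmod) as b) = lact (F1Mod :: (_, 'a) dgmod) as (Hb b)"
  proof (rule ext)
    fix c
    have "Hb (actb (F1Mod :: (_, 'a) dgmod) as b) c = (\<Sum>(r,y)\<leftarrow>Hl b. r * (if c = actF as y then 1 else (0::'a)))"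
      by (simp add: actb_F1 Hb_def Hl_act sd_def sum_map_Z[where \<phi>="\<lambda>y. if c = y then 1 else 0"] del: map_map)
    also have "\<dots> = lact (F1Mod :: (_, 'a) dgmod) as (Hb b) c"
      by (simp add: lact_def Hb_def lin_ext_sd actb_F1 eq_commute)
    finally show "Hb (actb (F1Mod :: (_, 'a) dgmod) as b) c = lact (F1Mod :: (_, 'a) dgmod) as (Hb b) c" .
  qed
qed

lemma BI:
  assumes bB: "b \<in> F1basis n"
  shows "lin_ext Bb (Pb b) c - (if c = b then 1 else 0) =
         lin_ext F1difb (Hb b) c + (lin_ext Hb (F1difb b) (c :: nat list \<times> nat list) :: 'a::comm_ring_1)"
proof -
  let ?\<phi> = "\<lambda>z. if c = z then 1 else (0::'a)"
  have 1: "lin_ext F1difb (Hb b) c = (\<Sum>(r,y)\<leftarrow>Hl b. r * Dsum ?\<phi> y)"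
    by (simp add: Hb_def lin_ext_sd F1difb_Dsum)
  have "(\<lambda>y. Hb y c :: 'a) = Hsum ?\<phi>"
    by (simp add: Hb_def sd_def Hsum_def fun_eq_iff)
  hence 2: "lin_ext Hb (F1difb b) c = Dsum (Hsum ?\<phi>) b"
    by (simp add: lin_ext_F1difb)
  obtain J I where bJI: "b = (J, I)" by (cases b)
  have 3: "lin_ext Bb (Pb b) c = (if \<forall>i\<in>set (snd b). i = 1 then ?\<phi> ([sum_list (fst b)], [1]) else 0)"
    by (simp add: bJI Pb_cases lin_ext_delta lin_ext_zero Bb_def)
  show ?thesis
    unfolding 1 2 3 using E_lemma[OF bB, of ?\<phi>] by simp
qed

lemma homot: "homotopic (F1Mod :: (nat list \<times> nat list, 'a::comm_ring_1) dgmod) F1Mod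
              (comp_map pmap betamap) idmap"
  unfolding homotopic_def
proof (intro exI conjI allI ballI)
  show "is_lmod_map (F1Mod :: (nat list \<times> nat list, 'a::comm_ring_1) dgmod) F1Mod (-1) (\<lambda>n. lin_ext Hb)"
    by (rule h_lmod)
  fix n and x :: "nat list \<times> nat list \<Rightarrow> 'a"
  assume x: "x \<in> elems (bas (F1Mod :: (_, 'a) dgmod) n)"
  hence fx: "finite (supp x)" and sx: "supp x \<subseteq> F1basis n" by (auto simp: elems_def F1Mod_simps)
  show "(\<lambda>c. comp_map pmap betamap n x c - idmap n x c) = dmap F1Mod F1Mod (- 1) (\<lambda>n. lin_ext Hb) n x"
  proof (rule ext)
    fix c
    have fP: "\<forall>b\<in>supp x. finite (supp (Pb b :: nat \<Rightarrow> 'a))"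
    proof
      fix b :: "nat list \<times> nat list"
      have "supp (Pb b :: nat \<Rightarrow> 'a) \<subseteq> {sum_list (fst b)}" by (cases b) (auto simp: Pb_def supp_def)
      thus "finite (supp (Pb b :: nat \<Rightarrow> 'a))" by (rule finite_subset) simp
    qed
    have e1: "comp_map pmap betamap n x c = lin_ext (\<lambda>b. lin_ext Bb (Pb b)) x c"
      by (simp add: comp_map_def pmap_eq betamap_eq lin_ext_comp[OF fx fP])
    have e2: "idmap n x c = lin_ext (\<lambda>b c. if c = b then 1 else 0) x c"
      by (simp add: idmap_def lin_ext_id[OF fx])
    have e3: "dmap F1Mod F1Mod (- 1) (\<lambda>n. lin_ext Hb) n x c =
       lin_ext (\<lambda>b. lin_ext F1difb (Hb b)) x c + lin_ext (\<lambda>b. lin_ext Hb (F1difb b)) x c"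
      by (simp add: dmap_def dif_def F1Mod_simps sgn_pow_def lin_ext_comp[OF fx]
                    finite_supp_F1difb Hb_def finite_supp_sd)
    have "lin_ext (\<lambda>b. lin_ext Bb (Pb b)) x c - lin_ext (\<lambda>b c. if c = b then 1 else 0) x c
        = (\<Sum>b\<in>supp x. x b * (lin_ext Bb (Pb b) c - (if c = b then 1 else 0)))"
      by (simp add: lin_ext_def sum_subtractf right_diff_distrib)
    also have "\<dots> = (\<Sum>b\<in>supp x. x b * (lin_ext F1difb (Hb b) c + lin_ext Hb (F1difb b) c))"
    proof (rule sum.cong[OF refl])
      fix b assume "b \<in> supp x"
      hence bB: "b \<in> F1basis n" using sx by blast
      show "x b * (lin_ext Bb (Pb b) c - (if c = b then 1 else 0)) =
            x b * (lin_ext F1difb (Hb b) c + lin_ext Hb (F1difb b) c)" by (simp only: BI[OF bB, of c])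
    qed
    also have "\<dots> = lin_ext (\<lambda>b. lin_ext F1difb (Hb b)) x c + lin_ext (\<lambda>b. lin_ext Hb (F1difb b)) x c"
      by (simp add: lin_ext_def sum.distrib distrib_left)
    finally show "comp_map pmap betamap n x c - idmap n x c = dmap F1Mod F1Mod (- 1) (\<lambda>n. lin_ext Hb) n x c"
      unfolding e1 e2 e3 .
  qed
qed

theorem mainTheorem5:
  shows "closed_map (F1Mod :: (nat list \<times> nat list, 'a::comm_ring_1) dgmod) AsMod pmap
       \<and> closed_map (AsMod :: (nat, 'a) dgmod) F1Mod betamap
       \<and> (\<forall>n. \<forall>x\<in>elems (bas (AsMod :: (nat, 'a) dgmod) n).
              comp_map betamap pmap n x = (idmap n x :: nat \<Rightarrow> 'a))
       \<and> homotopic (F1Mod :: (nat list \<times> nat list, 'a) dgmod) F1Mod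
              (comp_map pmap betamap) idmap"
  using p_closed b_closed bp_id homot by blast

end
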